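(* Let $\Delta=[-\frac{\pi}{2},\frac{\pi}{2}]$ and define $K_i:\Delta\times\Delta\to\mathbb{R}$ by $K_i(x,y)=2-\frac{\pi}{2}\sin|x-y|$. For $y\in\Delta$ put $k_y=K_i(\cdot,y)$. Then for every $f\in H^1_0(\Delta)$ and every $y\in\Delta$ one has $k_y\in H^1_0(\Delta)$ and $$f(y)=\langle f,k_y\rangle_i,$$ i.e. $K_i$ is a reproducing kernel for the inner product space $(H^1_0(\Delta),\langle\cdot,\cdot\rangle_i)$.
   Context: $H^1(\Delta)$ denotes the space of absolutely continuous functions $f:\Delta\to\mathbb{R}$ whose (a.e. defined) derivative $f'$ lies in $L_2(\Delta)$. $H^1_0(\Delta)$ is the subspace of those $f\in H^1(\Delta)$ with $f(-\frac{\pi}{2})=f(\frac{\pi}{2})$. For $f,g\in H^1_0(\Delta)$, $$\langle f,g\rangle_i=\frac{1}{\pi^2}\Big[2\Big(\int_{-\pi/2}^{\pi/2}f\Big)\Big(\int_{-\pi/2}^{\pi/2}g\Big)-\pi\int_{-\pi/2}^{\pi/2}\big(fg-f'g'\big)\Big],$$ which is a positive definite inner product on $H^1_0(\Delta)$. *)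

theory Defs
  imports "HOL-Analysis.Analysis"
begin

definition Delta :: "real set" where
  "Delta = {-(pi/2) .. pi/2}"

definition abs_cont_on :: "real \<Rightarrow> real \<Rightarrow> (real \<Rightarrow> real) \<Rightarrow> bool" where
  "abs_cont_on a b f \<longleftrightarrow>
     (\<forall>e>0. \<exists>d>0. \<forall>(n::nat) (I::nat \<Rightarrow> real \<times> real).
        (\<forall>i<n. a \<le> fst (I i) \<and> fst (I i) \<le> snd (I i) \<and> snd (I i) \<le> b)
        \<and> (\<forall>i<n. \<forall>j<n. i \<noteq> j \<longrightarrow> {fst (I i) <..< snd (I i)} \<inter> {fst (I j) <..< snd (I j)} = {})
        \<and> (\<Sum>i<n. snd (I i) - fst (I i)) < d
        \<longrightarrow> (\<Sum>i<n. \<bar>f (snd (I i)) - f (fst (I i))\<bar>) < e)"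

definition H1_deriv :: "(real \<Rightarrow> real) \<Rightarrow> (real \<Rightarrow> real) \<Rightarrow> bool" where
  "H1_deriv f f' \<longleftrightarrow>
     abs_cont_on (-(pi/2)) (pi/2) f
     \<and> (AE x in lborel. x \<in> Delta \<longrightarrow> (f has_real_derivative f' x) (at x within Delta))
     \<and> set_borel_measurable lborel Delta f'
     \<and> set_integrable lborel Delta (\<lambda>x. (f' x)\<^sup>2)"

definition H1 :: "(real \<Rightarrow> real) \<Rightarrow> bool" where
  "H1 f \<longleftrightarrow> abs_cont_on (-(pi/2)) (pi/2) f \<and> (\<exists>f'. H1_deriv f f')"

definition H1_0 :: "(real \<Rightarrow> real) \<Rightarrow> bool" where
  "H1_0 f \<longleftrightarrow> H1 f \<and> f (-(pi/2)) = f (pi/2)"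

text \<open>The inner product <f,g>_i, expressed with chosen a.e. derivatives f', g'.\<close>
definition ip_i :: "(real \<Rightarrow> real) \<Rightarrow> (real \<Rightarrow> real) \<Rightarrow> (real \<Rightarrow> real) \<Rightarrow> (real \<Rightarrow> real) \<Rightarrow> real" where
  "ip_i f f' g g' = (1 / pi\<^sup>2) *
     (2 * (LINT x:Delta|lborel. f x) * (LINT x:Delta|lborel. g x)
      - pi * (LINT x:Delta|lborel. f x * g x - f' x * g' x))"

definition K_i :: "real \<Rightarrow> real \<Rightarrow> real" where
  "K_i x y = 2 - (pi/2) * sin \<bar>x - y\<bar>"

end

theory Submission
  imports Defs
begin


lemma ftc_ac:
  fixes F g :: "real \<Rightarrow> real"
  assumes ab: "a \<le> b" and ac: "abs_cont_on a b F" and negS: "negligible S"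
    and der: "\<And>x. x \<in> {a..b} - S \<Longrightarrow> (F has_real_derivative g x) (at x within {a..b})"
    and g0: "\<And>x. x \<in> S \<Longrightarrow> g x = 0"
  shows "(g has_integral (F b - F a)) {a..b}"
  unfolding has_integral_real
proof (intro allI impI)
  fix e :: real assume e: "e > 0"
  have "e/2 > 0" using e by simp
  from ac[unfolded abs_cont_on_def, rule_format, OF this] obtain d where d: "d > 0" and
      dAC: "\<forall>(n::nat) (I::nat \<Rightarrow> real \<times> real).
        (\<forall>i<n. a \<le> fst (I i) \<and> fst (I i) \<le> snd (I i) \<and> snd (I i) \<le> b)
        \<and> (\<forall>i<n. \<forall>j<n. i \<noteq> j \<longrightarrow> {fst (I i) <..< snd (I i)} \<inter> {fst (I j) <..< snd (I j)} = {})
        \<and> (\<Sum>i<n. snd (I i) - fst (I i)) < d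
        \<longrightarrow> (\<Sum>i<n. \<bar>F (snd (I i)) - F (fst (I i))\<bar>) < e/2" by blast
  have "((indicator S :: real \<Rightarrow> real) has_integral 0) {a..b}" using negS unfolding negligible_def
    by (metis box_real(2))
  then obtain \<gamma>0 where g0gauge: "gauge \<gamma>0" and g0fine: "\<And>p. p tagged_division_of {a..b} \<Longrightarrow> \<gamma>0 fine p \<Longrightarrow>
      norm ((\<Sum>(x,k)\<in>p. measure lborel k *\<^sub>R (indicator S x :: real)) - 0) < d"
    unfolding has_integral_real using d by meson
  define \<epsilon> where "\<epsilon> = e / (2*(b - a + 1))"
  have \<epsilon>: "\<epsilon> > 0" using e ab by (simp add: \<epsilon>_def)
  have "\<forall>x. \<exists>r>0. x \<in> {a..b} - S \<longrightarrow> (\<forall>z\<in>{a..b}. norm (z - x) < r \<longrightarrow> norm (F z - F x - (z - x) * g x) \<le> \<epsilon> * norm (z - x))"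
  proof
    fix x show "\<exists>r>0. x \<in> {a..b} - S \<longrightarrow> (\<forall>z\<in>{a..b}. norm (z - x) < r \<longrightarrow> norm (F z - F x - (z - x) * g x) \<le> \<epsilon> * norm (z - x))"
    proof (cases "x \<in> {a..b} - S")
      case True
      have "\<forall>e>0. \<exists>d>0. \<forall>z\<in>{a..b}. norm (z - x) < d \<longrightarrow> norm (F z - F x - g x * (z - x)) \<le> e * norm (z - x)"
        using der[OF True, unfolded has_field_derivative_def has_derivative_within_alt] by blast
      then obtain q where "q > 0" "\<forall>z\<in>{a..b}. norm (z - x) < q \<longrightarrow> norm (F z - F x - g x * (z - x)) \<le> \<epsilon> * norm (z - x)"
        using \<epsilon> by blast
      then show ?thesis by (intro exI[of _ q]) (simp add: mult.commute)
    next
      case False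
      then show ?thesis by (intro exI[of _ 1]) auto
    qed
  qed
  then obtain r where r: "\<And>x. r x > 0" and
    rD: "\<And>x z. x \<in> {a..b} - S \<Longrightarrow> z \<in> {a..b} \<Longrightarrow> norm (z - x) < r x \<Longrightarrow> norm (F z - F x - (z - x) * g x) \<le> \<epsilon> * norm (z - x)"
    by metis
  show "\<exists>\<gamma>. gauge \<gamma> \<and> (\<forall>\<D>. \<D> tagged_division_of {a..b} \<and> \<gamma> fine \<D> \<longrightarrow>
        norm ((\<Sum>(x,k)\<in>\<D>. measure lborel k *\<^sub>R g x) - (F b - F a)) < e)"
  proof (intro exI conjI allI impI)
    show "gauge (\<lambda>x. \<gamma>0 x \<inter> ball x (r x))" by (rule gauge_Int[OF g0gauge gauge_ball_dependent]) (simp add: r)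
    fix p assume "p tagged_division_of {a..b} \<and> (\<lambda>x. \<gamma>0 x \<inter> ball x (r x)) fine p"
    then have p: "p tagged_division_of {a..b}" and fi: "(\<lambda>x. \<gamma>0 x \<inter> ball x (r x)) fine p" by simp_all
    have f0: "\<gamma>0 fine p" and fr: "(\<lambda>x. ball x (r x)) fine p" using fi unfolding fine_Int by simp_all
    have finp: "finite p" using tagged_division_ofD(1)[OF p] .
    have Kint: "\<And>x K. (x,K) \<in> p \<Longrightarrow> K = {Inf K..Sup K} \<and> Inf K \<le> Sup K \<and> x \<in> K \<and> K \<subseteq> {a..b} \<and> a \<le> Inf K \<and> Sup K \<le> b"
    proof -
      fix x K assume xK: "(x,K) \<in> p"
      obtain u v where K: "K = cbox u v" using tagged_division_ofD(4)[OF p xK] by blast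
      have xk: "x \<in> K" using tagged_division_ofD(2)[OF p xK] .
      have kab: "K \<subseteq> {a..b}" using tagged_division_ofD(3)[OF p xK] .
      have K': "K = {u..v}" using K by (simp add: cbox_interval)
      have uv: "u \<le> v" using xk K' by simp
      show "K = {Inf K..Sup K} \<and> Inf K \<le> Sup K \<and> x \<in> K \<and> K \<subseteq> {a..b} \<and> a \<le> Inf K \<and> Sup K \<le> b" using K' uv xk kab by auto
    qed
    define p1 where "p1 = {xK \<in> p. fst xK \<in> S}"
    define p2 where "p2 = {xK \<in> p. fst xK \<notin> S}"
    have fin1: "finite p1" and fin2: "finite p2" using finp by (auto simp: p1_def p2_def)
    have split: "p = p1 \<union> p2" "p1 \<inter> p2 = {}" by (auto simp: p1_def p2_def)
    have "F b - F a = (\<Sum>(x,K)\<in>p. F (Sup K) - F (Inf K))"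
      using additive_tagged_division_1[OF ab p, of F] by simp
    then have "(\<Sum>(x,k)\<in>p. measure lborel k *\<^sub>R g x) - (F b - F a) = (\<Sum>(x,K)\<in>p. measure lborel K * g x - (F (Sup K) - F (Inf K)))"
      by (simp add: sum_subtractf split_def)
    also have "\<dots> = (\<Sum>(x,K)\<in>p1. measure lborel K * g x - (F (Sup K) - F (Inf K))) + (\<Sum>(x,K)\<in>p2. measure lborel K * g x - (F (Sup K) - F (Inf K)))"
      using split fin1 fin2 by (simp add: sum.union_disjoint)
    finally have eq: "(\<Sum>(x,k)\<in>p. measure lborel k *\<^sub>R g x) - (F b - F a) = \<dots>" .
    have sum1: "(\<Sum>(x,K)\<in>p1. measure lborel K) < d"
    proof -
      have "(\<Sum>(x,k)\<in>p. measure lborel k *\<^sub>R (indicator S x :: real)) = (\<Sum>(x,K)\<in>p1. measure lborel K)"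
      proof -
        have "(\<Sum>(x,k)\<in>p. measure lborel k *\<^sub>R (indicator S x :: real)) = (\<Sum>(x,k)\<in>p1. measure lborel k *\<^sub>R (indicator S x :: real)) + (\<Sum>(x,k)\<in>p2. measure lborel k *\<^sub>R (indicator S x :: real))"
          using split fin1 fin2 by (simp add: sum.union_disjoint)
        also have "(\<Sum>(x,k)\<in>p2. measure lborel k *\<^sub>R (indicator S x :: real)) = 0"
          by (rule sum.neutral) (auto simp: p2_def)
        also have "(\<Sum>(x,k)\<in>p1. measure lborel k *\<^sub>R (indicator S x :: real)) = (\<Sum>(x,K)\<in>p1. measure lborel K)"
          by (rule sum.cong) (auto simp: p1_def)
        finally show ?thesis by simp
      qed
      moreover have "(\<Sum>(x,K)\<in>p1. measure lborel K) \<ge> 0" by (auto intro: sum_nonneg)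
      ultimately show ?thesis using g0fine[OF p f0] by simp
    qed
    have bound1: "(\<Sum>(x,K)\<in>p1. \<bar>F (Sup K) - F (Inf K)\<bar>) < e/2"
    proof -
      obtain h where h: "bij_betw h {0..<card p1} p1" using ex_bij_betw_nat_finite[OF fin1] by blast
      define n where "n = card p1"
      define I where "I i = (Inf (snd (h i)), Sup (snd (h i)))" for i
      have hp: "\<And>i. i < n \<Longrightarrow> h i \<in> p" using h unfolding bij_betw_def n_def p1_def by auto
      have reidx: "\<And>G. (\<Sum>i<n. G (h i)) = (\<Sum>xK\<in>p1. G xK)"
        using sum.reindex_bij_betw[OF h] by (simp add: n_def atLeast0LessThan)
      have c1: "\<forall>i<n. a \<le> fst (I i) \<and> fst (I i) \<le> snd (I i) \<and> snd (I i) \<le> b"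
      proof (intro allI impI)
        fix i assume "i < n"
        then have "h i \<in> p" by (rule hp)
        then obtain x K where "h i = (x,K)" "(x,K) \<in> p" by (cases "h i") auto
        then show "a \<le> fst (I i) \<and> fst (I i) \<le> snd (I i) \<and> snd (I i) \<le> b"
          using Kint[of x K] by (auto simp: I_def)
      qed
      have c2: "\<forall>i<n. \<forall>j<n. i \<noteq> j \<longrightarrow> {fst (I i) <..< snd (I i)} \<inter> {fst (I j) <..< snd (I j)} = {}"
      proof (intro allI impI)
        fix i j assume ij: "i < n" "j < n" "i \<noteq> j"
        then have hne: "h i \<noteq> h j" using h unfolding bij_betw_def inj_on_def n_def by auto
        obtain x K where xK: "h i = (x,K)" "(x,K) \<in> p" using hp[OF ij(1)] by (cases "h i") auto
        obtain x' K' where xK': "h j = (x',K')" "(x',K') \<in> p" using hp[OF ij(2)] by (cases "h j") auto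
        have ne: "(x,K) \<noteq> (x',K')" using hne xK(1) xK'(1) by simp
        have "interior K \<inter> interior K' = {}" by (rule tagged_division_ofD(5)[OF p xK(2) xK'(2) ne])
        moreover have "interior K = {Inf K<..<Sup K}" "interior K' = {Inf K'<..<Sup K'}"
          using Kint[OF xK(2)] Kint[OF xK'(2)] by (metis interior_atLeastAtMost_real)+
        ultimately show "{fst (I i) <..< snd (I i)} \<inter> {fst (I j) <..< snd (I j)} = {}"
          using xK xK' by (simp add: I_def)
      qed
      have "(\<Sum>i<n. snd (I i) - fst (I i)) = (\<Sum>xK\<in>p1. Sup (snd xK) - Inf (snd xK))"
        using reidx[of "\<lambda>xK. Sup (snd xK) - Inf (snd xK)"] by (simp add: I_def)
      also have "\<dots> = (\<Sum>(x,K)\<in>p1. measure lborel K)"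
      proof (rule sum.cong)
        fix xK assume "xK \<in> p1"
        then obtain x K where "xK = (x,K)" "(x,K) \<in> p" unfolding p1_def by (cases xK) auto
        then show "Sup (snd xK) - Inf (snd xK) = (case xK of (x,K) \<Rightarrow> measure lborel K)"
          using Kint[of x K] content_real[of "Inf K" "Sup K"] by simp
      qed simp
      finally have c3: "(\<Sum>i<n. snd (I i) - fst (I i)) < d" using sum1 by simp
      have "(\<Sum>i<n. \<bar>F (snd (I i)) - F (fst (I i))\<bar>) < e/2" using dAC c1 c2 c3 by simp
      moreover have "(\<Sum>i<n. \<bar>F (snd (I i)) - F (fst (I i))\<bar>) = (\<Sum>(x,K)\<in>p1. \<bar>F (Sup K) - F (Inf K)\<bar>)"
        using reidx[of "\<lambda>xK. \<bar>F (Sup (snd xK)) - F (Inf (snd xK))\<bar>"] by (simp add: I_def split_def)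
      ultimately show ?thesis by simp
    qed
    have n1: "\<bar>\<Sum>(x,K)\<in>p1. measure lborel K * g x - (F (Sup K) - F (Inf K))\<bar> < e/2"
    proof -
      have "(\<Sum>(x,K)\<in>p1. measure lborel K * g x - (F (Sup K) - F (Inf K))) = (\<Sum>(x,K)\<in>p1. - (F (Sup K) - F (Inf K)))"
        by (rule sum.cong) (auto simp: p1_def g0)
      also have "\<bar>\<dots>\<bar> \<le> (\<Sum>(x,K)\<in>p1. \<bar>F (Sup K) - F (Inf K)\<bar>)"
        by (rule order_trans[OF sum_abs]) (simp add: split_def abs_minus_commute)
      finally show ?thesis using bound1 by linarith
    qed
    have n2: "\<bar>\<Sum>(x,K)\<in>p2. measure lborel K * g x - (F (Sup K) - F (Inf K))\<bar> \<le> \<epsilon> * (b - a)"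
    proof -
      have "\<bar>\<Sum>(x,K)\<in>p2. measure lborel K * g x - (F (Sup K) - F (Inf K))\<bar> \<le> (\<Sum>(x,K)\<in>p2. \<epsilon> * measure lborel K)"
      proof (rule order_trans[OF sum_abs], rule sum_mono)
        fix xK assume "xK \<in> p2"
        then obtain x K where xK: "xK = (x,K)" "(x,K) \<in> p" "x \<notin> S" unfolding p2_def by (cases xK) auto
        obtain u v where uK: "Inf K = u" and vK: "Sup K = v" by blast
        have KI: "K = {Inf K..Sup K}" "Inf K \<le> Sup K" "x \<in> K" "K \<subseteq> {a..b}" "a \<le> Inf K" "Sup K \<le> b"
          using Kint[OF xK(2)] by auto
        have K: "K = {u..v}" "u \<le> v" "x \<in> K" "K \<subseteq> {a..b}" "a \<le> u" "v \<le> b"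
          using KI unfolding uK vK by auto
        have ux: "u \<le> x" "x \<le> v" using K(1,3) by auto
        have ball: "K \<subseteq> ball x (r x)" using fr xK(2) by (auto simp: fine_def)
        have xS: "x \<in> {a..b} - S" using K(3,4) xK(3) by blast
        have uu: "u \<in> {a..b}" "v \<in> {a..b}" using K(2,5,6) by auto
        have "u \<in> K" "v \<in> K" using K(1,2) by auto
        then have "u \<in> ball x (r x)" "v \<in> ball x (r x)" using ball by blast+
        then have du: "norm (u - x) < r x" "norm (v - x) < r x"
          by (auto simp: dist_real_def abs_minus_commute)
        have A: "\<bar>F u - F x - (u - x) * g x\<bar> \<le> \<epsilon> * \<bar>u - x\<bar>" using rD[OF xS uu(1) du(1)] by simp
        have B: "\<bar>F v - F x - (v - x) * g x\<bar> \<le> \<epsilon> * \<bar>v - x\<bar>" using rD[OF xS uu(2) du(2)] by simp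
        have eq: "(v - u) * g x - (F v - F u) = (F u - F x - (u - x) * g x) - (F v - F x - (v - x) * g x)"
          by (simp add: algebra_simps)
        have "\<bar>(v - u) * g x - (F v - F u)\<bar> \<le> \<bar>F u - F x - (u - x) * g x\<bar> + \<bar>F v - F x - (v - x) * g x\<bar>"
          unfolding eq by (rule abs_triangle_ineq4)
        also have "\<dots> \<le> \<epsilon> * \<bar>u - x\<bar> + \<epsilon> * \<bar>v - x\<bar>" using A B by linarith
        also have "\<dots> = \<epsilon> * (v - u)" using ux by (simp add: algebra_simps)
        finally have fin: "\<bar>(v - u) * g x - (F v - F u)\<bar> \<le> \<epsilon> * (v - u)" .
        have mK: "measure lborel K = v - u" using content_real[OF K(2)] K(1) by simp
        show "\<bar>case xK of (x,K) \<Rightarrow> measure lborel K * g x - (F (Sup K) - F (Inf K))\<bar> \<le> (case xK of (x,K) \<Rightarrow> \<epsilon> * measure lborel K)"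
          unfolding xK(1) prod.case mK uK vK using fin by simp
      qed
      also have "\<dots> = \<epsilon> * (\<Sum>(x,K)\<in>p2. measure lborel K)" by (simp add: sum_distrib_left split_def)
      also have "(\<Sum>(x,K)\<in>p2. measure lborel K) \<le> (\<Sum>(x,K)\<in>p. measure lborel K)"
        by (rule sum_mono2[OF finp]) (auto simp: p2_def split_def)
      also have "(\<Sum>(x,K)\<in>p. measure lborel K) = b - a"
      proof -
        have "(\<Sum>(x,K)\<in>p. measure lborel K) = (\<Sum>(x,K)\<in>p. Sup K - Inf K)"
        proof (rule sum.cong)
          fix xK assume "xK \<in> p"
          then obtain x K where xK: "xK = (x,K)" "(x,K) \<in> p" by (cases xK) auto
          have "Inf K \<le> Sup K" "K = {Inf K..Sup K}" using Kint[OF xK(2)] by auto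
          then have "measure lborel K = Sup K - Inf K" using content_real by metis
          then show "(case xK of (x,K) \<Rightarrow> measure lborel K) = (case xK of (x,K) \<Rightarrow> Sup K - Inf K)"
            unfolding xK(1) by simp
        qed simp
        also have "\<dots> = b - a" using additive_tagged_division_1[OF ab p, of "\<lambda>x. x"] by simp
        finally show ?thesis .
      qed
      finally show ?thesis using \<epsilon> by (simp add: mult_left_mono)
    qed
    have "\<epsilon> * (b - a) < e/2"
      using e ab by (simp add: \<epsilon>_def field_simps)
    then show "norm ((\<Sum>(x,k)\<in>p. measure lborel k *\<^sub>R g x) - (F b - F a)) < e"
      using eq n1 n2 by (simp only: real_norm_def)
  qed
qed


lemma ac_cont:
  assumes "abs_cont_on a b f" shows "continuous_on {a..b} f"
  unfolding continuous_on_iff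
proof (intro ballI allI impI)
  fix x and e :: real assume x: "x \<in> {a..b}" and e: "e > 0"
  from assms[unfolded abs_cont_on_def, rule_format, OF e] obtain d where d: "d > 0" and
      H: "\<forall>(n::nat) (I::nat \<Rightarrow> real \<times> real).
        (\<forall>i<n. a \<le> fst (I i) \<and> fst (I i) \<le> snd (I i) \<and> snd (I i) \<le> b)
        \<and> (\<forall>i<n. \<forall>j<n. i \<noteq> j \<longrightarrow> {fst (I i) <..< snd (I i)} \<inter> {fst (I j) <..< snd (I j)} = {})
        \<and> (\<Sum>i<n. snd (I i) - fst (I i)) < d
        \<longrightarrow> (\<Sum>i<n. \<bar>f (snd (I i)) - f (fst (I i))\<bar>) < e" by blast
  show "\<exists>d>0. \<forall>x'\<in>{a..b}. dist x' x < d \<longrightarrow> dist (f x') (f x) < e"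
  proof (intro exI[of _ d] conjI ballI impI)
    fix x' assume x': "x' \<in> {a..b}" "dist x' x < d"
    define I where "I = (\<lambda>i::nat. (min x x', max x x'))"
    have c1: "\<forall>i<1. a \<le> fst (I i) \<and> fst (I i) \<le> snd (I i) \<and> snd (I i) \<le> b"
      using x x' by (auto simp: I_def)
    have c2: "\<forall>i<1. \<forall>j<1. i \<noteq> j \<longrightarrow> {fst (I i) <..< snd (I i)} \<inter> {fst (I j) <..< snd (I j)} = {}"
      by auto
    have c3: "(\<Sum>i<1. snd (I i) - fst (I i)) < d"
      using x' by (auto simp: I_def dist_real_def)
    have "(\<Sum>i<(1::nat). \<bar>f (snd (I i)) - f (fst (I i))\<bar>) < e"
      using H[rule_format, OF conjI[OF c1 conjI[OF c2 c3]]] .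
    then have "\<bar>f (max x x') - f (min x x')\<bar> < e" by (simp add: I_def)
    then show "dist (f x') (f x) < e"
      by (cases "x \<le> x'") (auto simp: dist_real_def min_def max_def abs_minus_commute)
  qed (use d in auto)
qed

lemma ac_const: "abs_cont_on a b (\<lambda>x. c)"
  unfolding abs_cont_on_def by (intro allI impI exI[of _ 1]) simp

lemma ac_mult:
  assumes ab: "a \<le> b" and f: "abs_cont_on a b f" and L: "L \<ge> 0"
    and Lh: "\<And>x z. x \<in> {a..b} \<Longrightarrow> z \<in> {a..b} \<Longrightarrow> \<bar>h z - h x\<bar> \<le> L * \<bar>z - x\<bar>"
    and Mh: "\<And>x. x \<in> {a..b} \<Longrightarrow> \<bar>h x\<bar> \<le> M"
  shows "abs_cont_on a b (\<lambda>x. f x * h x)"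
proof -
  have "compact (f ` {a..b})" using ac_cont[OF f] compact_continuous_image compact_Icc by blast
  then have "bounded (f ` {a..b})" by (rule compact_imp_bounded)
  then obtain B where B0: "B > 0" and B1: "\<forall>y\<in>f ` {a..b}. norm y \<le> B" unfolding bounded_pos by blast
  have B: "B > 0" "\<And>x. x \<in> {a..b} \<Longrightarrow> \<bar>f x\<bar> \<le> B" using B0 B1 by auto
  have M0: "M \<ge> 0" using Mh[of a] ab by force
  show ?thesis unfolding abs_cont_on_def
  proof (intro allI impI)
    fix e :: real assume e: "e > 0"
    have e1: "e / (2 * (M + 1)) > 0" using e M0 by simp
    from f[unfolded abs_cont_on_def, rule_format, OF e1] obtain d1 where d1: "d1 > 0" and
      H: "\<forall>(n::nat) (I::nat \<Rightarrow> real \<times> real).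
        (\<forall>i<n. a \<le> fst (I i) \<and> fst (I i) \<le> snd (I i) \<and> snd (I i) \<le> b)
        \<and> (\<forall>i<n. \<forall>j<n. i \<noteq> j \<longrightarrow> {fst (I i) <..< snd (I i)} \<inter> {fst (I j) <..< snd (I j)} = {})
        \<and> (\<Sum>i<n. snd (I i) - fst (I i)) < d1
        \<longrightarrow> (\<Sum>i<n. \<bar>f (snd (I i)) - f (fst (I i))\<bar>) < e / (2 * (M + 1))" by blast
    define d where "d = min d1 (e / (2 * (B * L + 1)))"
    have BL: "B * L \<ge> 0" using B L by simp
    have d: "d > 0" using d1 e BL by (simp add: d_def)
    show "\<exists>d>0. \<forall>(n::nat) (I::nat \<Rightarrow> real \<times> real).
        (\<forall>i<n. a \<le> fst (I i) \<and> fst (I i) \<le> snd (I i) \<and> snd (I i) \<le> b)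
        \<and> (\<forall>i<n. \<forall>j<n. i \<noteq> j \<longrightarrow> {fst (I i) <..< snd (I i)} \<inter> {fst (I j) <..< snd (I j)} = {})
        \<and> (\<Sum>i<n. snd (I i) - fst (I i)) < d
        \<longrightarrow> (\<Sum>i<n. \<bar>f (snd (I i)) * h (snd (I i)) - f (fst (I i)) * h (fst (I i))\<bar>) < e"
    proof (intro exI[of _ d] conjI allI impI)
      show "d > 0" by (fact d)
      fix n :: nat and I :: "nat \<Rightarrow> real \<times> real"
      assume A: "(\<forall>i<n. a \<le> fst (I i) \<and> fst (I i) \<le> snd (I i) \<and> snd (I i) \<le> b)
        \<and> (\<forall>i<n. \<forall>j<n. i \<noteq> j \<longrightarrow> {fst (I i) <..< snd (I i)} \<inter> {fst (I j) <..< snd (I j)} = {})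
        \<and> (\<Sum>i<n. snd (I i) - fst (I i)) < d"
      have "(\<Sum>i<n. snd (I i) - fst (I i)) < d1" using A d_def by simp
      then have S1: "(\<Sum>i<n. \<bar>f (snd (I i)) - f (fst (I i))\<bar>) < e / (2 * (M + 1))"
        using H[rule_format, of n I] A by blast
      have S2: "(\<Sum>i<n. snd (I i) - fst (I i)) < e / (2 * (B * L + 1))"
        using A d_def by auto
      have trm: "\<bar>f (snd (I i)) * h (snd (I i)) - f (fst (I i)) * h (fst (I i))\<bar>
          \<le> M * \<bar>f (snd (I i)) - f (fst (I i))\<bar> + (B * L) * (snd (I i) - fst (I i))" if i: "i < n" for i
      proof -
        define u v where "u = fst (I i)" and "v = snd (I i)"
        have uv: "a \<le> u" "u \<le> v" "v \<le> b" using A i by (auto simp: u_def v_def)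
        have "f v * h v - f u * h u = h v * (f v - f u) + f u * (h v - h u)" by (simp add: algebra_simps)
        then have "\<bar>f v * h v - f u * h u\<bar> \<le> \<bar>h v\<bar> * \<bar>f v - f u\<bar> + \<bar>f u\<bar> * \<bar>h v - h u\<bar>"
          by (metis abs_mult abs_triangle_ineq)
        also have "\<dots> \<le> M * \<bar>f v - f u\<bar> + B * (L * \<bar>v - u\<bar>)"
        proof (rule add_mono)
          show "\<bar>h v\<bar> * \<bar>f v - f u\<bar> \<le> M * \<bar>f v - f u\<bar>" using Mh[of v] uv by (intro mult_right_mono) auto
          show "\<bar>f u\<bar> * \<bar>h v - h u\<bar> \<le> B * (L * \<bar>v - u\<bar>)"
            using B(2)[of u] Lh[of u v] uv B(1) by (intro mult_mono) auto
        qed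
        finally show ?thesis using uv by (simp add: u_def[symmetric] v_def[symmetric])
      qed
      have "(\<Sum>i<n. \<bar>f (snd (I i)) * h (snd (I i)) - f (fst (I i)) * h (fst (I i))\<bar>)
          \<le> (\<Sum>i<n. M * \<bar>f (snd (I i)) - f (fst (I i))\<bar> + (B * L) * (snd (I i) - fst (I i)))"
        by (rule sum_mono) (use trm in auto)
      also have "\<dots> = M * (\<Sum>i<n. \<bar>f (snd (I i)) - f (fst (I i))\<bar>) + (B * L) * (\<Sum>i<n. snd (I i) - fst (I i))"
        by (simp add: sum.distrib sum_distrib_left)
      also have "\<dots> < e/2 + e/2"
      proof (rule add_le_less_mono)
        have "M * (\<Sum>i<n. \<bar>f (snd (I i)) - f (fst (I i))\<bar>) \<le> M * (e / (2 * (M + 1)))"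
          using S1 M0 by (intro mult_left_mono) auto
        also have "\<dots> \<le> e/2" using M0 e by (simp add: field_simps)
        finally show "M * (\<Sum>i<n. \<bar>f (snd (I i)) - f (fst (I i))\<bar>) \<le> e/2" .
        have "(B * L) * (\<Sum>i<n. snd (I i) - fst (I i)) \<le> (B * L) * (e / (2 * (B * L + 1)))"
          using S2 BL by (intro mult_left_mono) auto
        also have "\<dots> < e/2" using BL e by (simp add: field_simps)
        finally show "(B * L) * (\<Sum>i<n. snd (I i) - fst (I i)) < e/2" .
      qed
      finally show "(\<Sum>i<n. \<bar>f (snd (I i)) * h (snd (I i)) - f (fst (I i)) * h (fst (I i))\<bar>) < e" by simp
    qed
  qed
qed

lemma ac_lip:
  assumes ab: "a \<le> b" and L: "L \<ge> 0"
    and Lh: "\<And>x z. x \<in> {a..b} \<Longrightarrow> z \<in> {a..b} \<Longrightarrow> \<bar>h z - h x\<bar> \<le> L * \<bar>z - x\<bar>"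
    and Mh: "\<And>x. x \<in> {a..b} \<Longrightarrow> \<bar>h x\<bar> \<le> M"
  shows "abs_cont_on a b h"
  using ac_mult[OF ab ac_const[of a b 1] L Lh Mh] by simp

lemma ac_sub:
  assumes "abs_cont_on a b f" "a \<le> a'" "b' \<le> b"
  shows "abs_cont_on a' b' f"
  unfolding abs_cont_on_def
proof (intro allI impI)
  fix e :: real assume e: "e > 0"
  from assms(1)[unfolded abs_cont_on_def, rule_format, OF e] obtain d where d: "d > 0" and
      H: "\<forall>(n::nat) (I::nat \<Rightarrow> real \<times> real).
        (\<forall>i<n. a \<le> fst (I i) \<and> fst (I i) \<le> snd (I i) \<and> snd (I i) \<le> b)
        \<and> (\<forall>i<n. \<forall>j<n. i \<noteq> j \<longrightarrow> {fst (I i) <..< snd (I i)} \<inter> {fst (I j) <..< snd (I j)} = {})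
        \<and> (\<Sum>i<n. snd (I i) - fst (I i)) < d
        \<longrightarrow> (\<Sum>i<n. \<bar>f (snd (I i)) - f (fst (I i))\<bar>) < e" by blast
  show "\<exists>d>0. \<forall>(n::nat) (I::nat \<Rightarrow> real \<times> real).
        (\<forall>i<n. a' \<le> fst (I i) \<and> fst (I i) \<le> snd (I i) \<and> snd (I i) \<le> b')
        \<and> (\<forall>i<n. \<forall>j<n. i \<noteq> j \<longrightarrow> {fst (I i) <..< snd (I i)} \<inter> {fst (I j) <..< snd (I j)} = {})
        \<and> (\<Sum>i<n. snd (I i) - fst (I i)) < d
        \<longrightarrow> (\<Sum>i<n. \<bar>f (snd (I i)) - f (fst (I i))\<bar>) < e"
  proof (intro exI[of _ d] conjI allI impI)
    fix n :: nat and I :: "nat \<Rightarrow> real \<times> real"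
    assume A: "(\<forall>i<n. a' \<le> fst (I i) \<and> fst (I i) \<le> snd (I i) \<and> snd (I i) \<le> b')
        \<and> (\<forall>i<n. \<forall>j<n. i \<noteq> j \<longrightarrow> {fst (I i) <..< snd (I i)} \<inter> {fst (I j) <..< snd (I j)} = {})
        \<and> (\<Sum>i<n. snd (I i) - fst (I i)) < d"
    have "\<forall>i<n. a \<le> fst (I i) \<and> fst (I i) \<le> snd (I i) \<and> snd (I i) \<le> b"
      using A assms(2,3) by force
    then show "(\<Sum>i<n. \<bar>f (snd (I i)) - f (fst (I i))\<bar>) < e" using H[rule_format, of n I] A by blast
  qed (fact d)
qed

lemma AE_negl:
  assumes "AE x in lborel. P x"
  obtains N where "negligible N" "\<And>x. x \<notin> N \<Longrightarrow> P x"
proof -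
  from assms obtain N where N: "{x \<in> space lborel. \<not> P x} \<subseteq> N" "emeasure lborel N = 0" "N \<in> sets lborel"
    by (rule AE_E)
  have "N \<in> null_sets lborel" using N by auto
  then have "N \<in> null_sets lebesgue" by (rule null_sets_completionI)
  then have "negligible N" by (simp add: negligible_iff_null_sets)
  moreover have "\<And>x. x \<notin> N \<Longrightarrow> P x" using N(1) by auto
  ultimately show ?thesis using that by blast
qed

lemma ftc_ae:
  fixes F g :: "real \<Rightarrow> real"
  assumes ab: "a \<le> b" and ac: "abs_cont_on a b F"
    and der: "AE x in lborel. x \<in> {a..b} \<longrightarrow> (F has_real_derivative g x) (at x within {a..b})"
  shows "(g has_integral (F b - F a)) {a..b}"
proof -
  obtain N where N: "negligible N" and PN: "\<And>x. x \<notin> N \<Longrightarrow> x \<in> {a..b} \<longrightarrow> (F has_real_derivative g x) (at x within {a..b})"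
    using AE_negl[OF der] by blast
  define g0 where "g0 x = (if x \<in> N then 0 else g x)" for x
  have "(g0 has_integral (F b - F a)) {a..b}"
  proof (rule ftc_ac[OF ab ac N])
    fix x assume "x \<in> {a..b} - N"
    then show "(F has_real_derivative g0 x) (at x within {a..b})" using PN by (simp add: g0_def)
  qed (simp add: g0_def)
  then show ?thesis
    by (rule has_integral_spike[OF N, rotated]) (simp add: g0_def)
qed

lemma set_integrable_add':
  assumes "set_integrable lborel A u" "set_integrable lborel A v"
  shows "set_integrable lborel A (\<lambda>x. u x + v x :: real)"
proof -
  have "(\<lambda>x. indicator A x *\<^sub>R (u x + v x)) = (\<lambda>x. indicator A x *\<^sub>R u x + indicator A x *\<^sub>R v x)"
    by (simp add: algebra_simps)
  then show ?thesis using assms unfolding set_integrable_def by (simp add: integrable_add)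
qed

lemma set_integrable_diff':
  assumes "set_integrable lborel A u" "set_integrable lborel A v"
  shows "set_integrable lborel A (\<lambda>x. u x - v x :: real)"
proof -
  have "(\<lambda>x. indicator A x *\<^sub>R (u x - v x)) = (\<lambda>x. indicator A x *\<^sub>R u x - indicator A x *\<^sub>R v x)"
    by (simp add: algebra_simps)
  then show ?thesis using assms unfolding set_integrable_def by (simp add: integrable_diff)
qed

lemma sin_lip: "\<bar>sin (a::real) - sin b\<bar> \<le> \<bar>a - b\<bar>"
proof -
  have "\<bar>sin a - sin b\<bar> = 2 * \<bar>sin ((a - b) / 2)\<bar> * \<bar>cos ((a + b) / 2)\<bar>"
    by (simp add: sin_diff_sin abs_mult)
  also have "\<dots> \<le> 2 * \<bar>(a - b) / 2\<bar> * 1"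
    using abs_sin_x_le_abs_x[of "(a - b) / 2"] by (intro mult_mono) auto
  finally show ?thesis by simp
qed

lemma cos_lip: "\<bar>cos (a::real) - cos b\<bar> \<le> \<bar>a - b\<bar>"
proof -
  have "\<bar>cos a - cos b\<bar> = 2 * \<bar>sin ((a + b) / 2)\<bar> * \<bar>sin ((b - a) / 2)\<bar>"
    by (simp add: cos_diff_cos abs_mult)
  also have "\<dots> \<le> 2 * 1 * \<bar>(b - a) / 2\<bar>"
    using abs_sin_x_le_abs_x[of "(b - a) / 2"] by (intro mult_mono) auto
  finally show ?thesis by (simp add: abs_minus_commute)
qed


lemma k_deriv:
  fixes x y :: real
  assumes "x \<noteq> y"
  shows "((\<lambda>t. K_i t y) has_real_derivative (-(pi/2) * sgn (x - y) * cos (x - y))) (at x)"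
proof (cases "x < y")
  case True
  have "((\<lambda>t. 2 - (pi/2) * sin (y - t)) has_real_derivative (pi/2) * cos (y - x)) (at x)"
    by (auto intro!: derivative_eq_intros)
  then have "((\<lambda>t. K_i t y) has_real_derivative (pi/2) * cos (y - x)) (at x)"
    by (rule has_field_derivative_transform_within_open[where S="{..<y}"])
       (use True in \<open>auto simp: K_i_def abs_of_neg\<close>)
  moreover have "cos (y - x) = cos (x - y)" by (metis cos_minus minus_diff_eq)
  ultimately show ?thesis using True by simp
next
  case False
  then have xy: "x > y" using assms by simp
  have "((\<lambda>t. 2 - (pi/2) * sin (t - y)) has_real_derivative -(pi/2) * cos (x - y)) (at x)"
    by (auto intro!: derivative_eq_intros)
  then have "((\<lambda>t. K_i t y) has_real_derivative -(pi/2) * cos (x - y)) (at x)"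
    by (rule has_field_derivative_transform_within_open[where S="{y<..}"])
       (use xy in \<open>auto simp: K_i_def abs_of_pos\<close>)
  then show ?thesis using xy by simp
qed

lemma k_lip:
  fixes x z y :: real
  shows "\<bar>K_i z y - K_i x y\<bar> \<le> pi/2 * \<bar>z - x\<bar>"
proof -
  have "K_i z y - K_i x y = (pi/2) * (sin \<bar>x - y\<bar> - sin \<bar>z - y\<bar>)"
    by (simp add: K_i_def algebra_simps)
  then have "\<bar>K_i z y - K_i x y\<bar> = \<bar>pi/2\<bar> * \<bar>sin \<bar>x - y\<bar> - sin \<bar>z - y\<bar>\<bar>"
    by (simp only: abs_mult)
  also have "\<bar>pi/2\<bar> = pi/2" by simp
  finally have "\<bar>K_i z y - K_i x y\<bar> = pi/2 * \<bar>sin \<bar>x - y\<bar> - sin \<bar>z - y\<bar>\<bar>" .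
  also have "\<dots> \<le> pi/2 * \<bar>\<bar>x - y\<bar> - \<bar>z - y\<bar>\<bar>"
    by (intro mult_left_mono sin_lip) simp
  also have "\<bar>\<bar>x - y\<bar> - \<bar>z - y\<bar>\<bar> \<le> \<bar>z - x\<bar>" by linarith
  then have "pi/2 * \<bar>\<bar>x - y\<bar> - \<bar>z - y\<bar>\<bar> \<le> pi/2 * \<bar>z - x\<bar>" by (intro mult_left_mono) simp_all
  finally show ?thesis .
qed

lemma k_bound: "\<bar>K_i x y\<bar> \<le> 2 + pi/2"
proof -
  have "\<bar>(pi/2) * sin \<bar>x - y\<bar>\<bar> \<le> pi/2 * 1"
    by (simp add: abs_mult)
  then show ?thesis unfolding K_i_def by linarith
qed

lemma k_ends:
  assumes "y \<in> Delta"
  shows "K_i (-(pi/2)) y = K_i (pi/2) y"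
proof -
  have y: "-(pi/2) \<le> y" "y \<le> pi/2" using assms by (auto simp: Delta_def)
  have "\<bar>-(pi/2) - y\<bar> = pi/2 + y" "\<bar>pi/2 - y\<bar> = pi/2 - y" using y by auto
  moreover have "sin (pi/2 + y) = cos y" "sin (pi/2 - y) = cos y"
    by (simp_all add: sin_add sin_diff)
  ultimately show ?thesis by (simp add: K_i_def)
qed


lemma Delta_sets[measurable]: "Delta \<in> sets lborel"
  by (simp add: Delta_def)

lemma Delta_compact: "compact Delta"
  by (simp add: Delta_def)

lemma k0_bound: "\<bar>-(pi/2) * sgn (x - y) * cos (x - y)\<bar> \<le> pi/2"
proof -
  have "\<bar>sgn (x - y) * cos (x - y)\<bar> \<le> 1"
    by (simp add: abs_mult sgn_real_def mult_le_one)
  then have "pi/2 * \<bar>sgn (x - y) * cos (x - y)\<bar> \<le> pi/2 * 1" by (intro mult_left_mono) simp_all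
  then show ?thesis by (simp add: abs_mult)
qed

lemma const_set_integrable: "set_integrable lborel Delta (\<lambda>x. c :: real)"
  unfolding set_integrable_def by (rule borel_integrable_compact[OF Delta_compact]) simp

lemma bounded_set_integrable:
  assumes m: "set_borel_measurable lborel Delta g" and B: "\<And>x. x \<in> Delta \<Longrightarrow> \<bar>g x\<bar> \<le> B"
  shows "set_integrable lborel Delta (g :: real \<Rightarrow> real)"
proof (rule set_integrable_bound[OF const_set_integrable[of B] m])
  show "AE x in lborel. x \<in> Delta \<longrightarrow> norm (g x) \<le> norm B"
    using B by (auto intro!: AE_I2 order_trans[OF _ abs_ge_self])
qed

lemma k_H1:
  assumes y: "y \<in> Delta"
  shows "H1_deriv (\<lambda>x. K_i x y) (\<lambda>x. -(pi/2) * sgn (x - y) * cos (x - y))"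
    and "H1_0 (\<lambda>x. K_i x y)"
proof -
  have ac: "abs_cont_on (-(pi/2)) (pi/2) (\<lambda>x. K_i x y)"
    by (rule ac_lip[where L="pi/2" and M="2 + pi/2"]) (use k_lip k_bound in auto)
  have der: "AE x in lborel. x \<in> Delta \<longrightarrow>
      ((\<lambda>x. K_i x y) has_real_derivative -(pi/2) * sgn (x - y) * cos (x - y)) (at x within Delta)"
    using AE_lborel_singleton[of y]
    by eventually_elim (rule impI, rule has_field_derivative_at_within, rule k_deriv, simp)
  have meas: "set_borel_measurable lborel Delta (\<lambda>x. -(pi/2) * sgn (x - y) * cos (x - y))"
    unfolding set_borel_measurable_def by measurable
  have sq: "set_integrable lborel Delta (\<lambda>x. (-(pi/2) * sgn (x - y) * cos (x - y))\<^sup>2)"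
  proof (rule bounded_set_integrable[where B="(pi/2)^2"])
    show "set_borel_measurable lborel Delta (\<lambda>x. (-(pi/2) * sgn (x - y) * cos (x - y))\<^sup>2)"
      unfolding set_borel_measurable_def by measurable
    fix x
    have "\<bar>-(pi/2) * sgn (x - y) * cos (x - y)\<bar>\<^sup>2 \<le> (pi/2)\<^sup>2"
      by (rule power_mono[OF k0_bound]) simp
    then show "\<bar>(-(pi/2) * sgn (x - y) * cos (x - y))\<^sup>2\<bar> \<le> (pi/2)^2" by (metis abs_power2 power2_abs)
  qed
  show d: "H1_deriv (\<lambda>x. K_i x y) (\<lambda>x. -(pi/2) * sgn (x - y) * cos (x - y))"
    unfolding H1_deriv_def using ac der meas sq by blast
  show "H1_0 (\<lambda>x. K_i x y)"
    unfolding H1_0_def H1_def using ac d k_ends[OF y] by blast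
qed


lemma abs_le_1_sq: "\<bar>t::real\<bar> \<le> 1 + t\<^sup>2"
proof (cases "\<bar>t\<bar> \<le> 1")
  case True then show ?thesis by (smt (verit) zero_le_power2)
next
  case False
  then have "\<bar>t\<bar> * 1 \<le> \<bar>t\<bar> * \<bar>t\<bar>" by (intro mult_left_mono) simp_all
  moreover have "t\<^sup>2 = \<bar>t\<bar> * \<bar>t\<bar>" by (metis power2_abs power2_eq_square)
  ultimately show ?thesis by simp
qed

lemma c_lip: "\<bar>c * cos (z - y) - c * cos (x - y)\<bar> \<le> \<bar>c\<bar> * \<bar>z - (x::real)\<bar>"
proof -
  have "\<bar>c * cos (z - y) - c * cos (x - y)\<bar> = \<bar>c\<bar> * \<bar>cos (z - y) - cos (x - y)\<bar>"
    by (simp add: abs_mult[symmetric] right_diff_distrib)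
  also have "\<dots> \<le> \<bar>c\<bar> * \<bar>(z - y) - (x - y)\<bar>" by (intro mult_left_mono cos_lip) simp
  finally show ?thesis by simp
qed

lemma c_bound: "\<bar>c * cos (x::real)\<bar> \<le> \<bar>c\<bar>"
  using mult_left_mono[of "\<bar>cos x\<bar>" 1 "\<bar>c\<bar>"] by (simp add: abs_mult)

lemma repro:
  assumes f0: "H1_0 f" and y: "y \<in> Delta" and df: "H1_deriv f f'" and dk: "H1_deriv (\<lambda>x. K_i x y) k'"
  shows "f y = ip_i f f' (\<lambda>x. K_i x y) k'"
proof -
  have yab: "-(pi/2) \<le> y" "y \<le> pi/2" using y by (auto simp: Delta_def)
  have acf: "abs_cont_on (-(pi/2)) (pi/2) f" and fab: "f (-(pi/2)) = f (pi/2)"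
    using f0 by (auto simp: H1_0_def H1_def)
  have fder: "AE x in lborel. x \<in> Delta \<longrightarrow> (f has_real_derivative f' x) (at x within Delta)"
    and f'meas: "set_borel_measurable lborel Delta f'" and f'sq: "set_integrable lborel Delta (\<lambda>x. (f' x)\<^sup>2)"
    using df by (auto simp: H1_deriv_def)
  have kder: "AE x in lborel. x \<in> Delta \<longrightarrow> ((\<lambda>x. K_i x y) has_real_derivative k' x) (at x within Delta)"
    and k'meas: "set_borel_measurable lborel Delta k'" using dk by (auto simp: H1_deriv_def)
  define k0 where "k0 x = -(pi/2) * sgn (x - y) * cos (x - y)" for x
  define s where "s x = (pi/2) * sin \<bar>x - y\<bar>" for x
  define c1 where "c1 x = (pi/2) * cos (x - y)" for x
  define c2 where "c2 x = -(pi/2) * cos (x - y)" for x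
  have Ks: "K_i x y = 2 - s x" for x by (simp add: K_i_def s_def)
  have kk0: "AE x in lborel. x \<in> Delta \<longrightarrow> k' x = k0 x \<and> x \<noteq> y"
    using kder AE_lborel_singleton[of y] AE_lborel_singleton[of "-(pi/2)"] AE_lborel_singleton[of "pi/2"]
  proof eventually_elim
    case (elim x)
    show ?case
    proof
      assume x: "x \<in> Delta"
      then have xi: "x \<in> interior Delta" using elim by (auto simp: Delta_def)
      have "((\<lambda>x. K_i x y) has_real_derivative k' x) (at x)"
        using elim(1) x at_within_interior[OF xi] by simp
      moreover have "((\<lambda>x. K_i x y) has_real_derivative k0 x) (at x)"
        unfolding k0_def by (rule k_deriv) (use elim in simp)
      ultimately show "k' x = k0 x \<and> x \<noteq> y" using DERIV_unique elim by blast
    qed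
  qed
  obtain N where N: "negligible N" and PN: "\<And>x. x \<notin> N \<Longrightarrow> x \<in> Delta \<longrightarrow> k' x = k0 x \<and> x \<noteq> y"
    using AE_negl[OF kk0] by blast
  have contf: "continuous_on Delta f" using ac_cont[OF acf] by (simp add: Delta_def)
  have conts: "continuous_on Delta s" unfolding s_def by (intro continuous_intros)
  have intf: "set_integrable lborel Delta f" unfolding set_integrable_def
    by (rule borel_integrable_compact[OF Delta_compact contf])
  have intfs: "set_integrable lborel Delta (\<lambda>x. f x * s x)" unfolding set_integrable_def
    by (rule borel_integrable_compact[OF Delta_compact]) (intro continuous_intros contf conts)
  have intk: "set_integrable lborel Delta (\<lambda>x. K_i x y)" unfolding set_integrable_def
    by (rule borel_integrable_compact[OF Delta_compact]) (unfold K_i_def, intro continuous_intros)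
  have intf': "set_integrable lborel Delta f'"
  proof (rule set_integrable_bound[OF set_integrable_add'[OF const_set_integrable[of 1] f'sq] f'meas])
    show "AE x in lborel. x \<in> Delta \<longrightarrow> norm (f' x) \<le> norm (1 + (f' x)\<^sup>2)"
      by (rule AE_I2) (auto simp: abs_le_1_sq)
  qed
  have intf'k': "set_integrable lborel Delta (\<lambda>x. f' x * k' x)"
  proof (rule set_integrable_bound[OF set_integrable_mult_right[of "pi/2", OF intf']])
    have eq: "(\<lambda>x. indicator Delta x *\<^sub>R (f' x * k' x)) = (\<lambda>x. (indicator Delta x *\<^sub>R f' x) * (indicator Delta x *\<^sub>R k' x))"
      by (auto simp: indicator_def fun_eq_iff)
    show "set_borel_measurable lborel Delta (\<lambda>x. f' x * k' x)"
      unfolding set_borel_measurable_def eq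
      by (rule borel_measurable_times[OF f'meas[unfolded set_borel_measurable_def] k'meas[unfolded set_borel_measurable_def]])
    show "AE x in lborel. x \<in> Delta \<longrightarrow> norm (f' x * k' x) \<le> norm (pi/2 * f' x)"
      using kk0
    proof eventually_elim
      case (elim x)
      show ?case
      proof
        assume "x \<in> Delta"
        then have "k' x = k0 x" using elim by blast
        then have "\<bar>k' x\<bar> \<le> pi/2" using k0_bound unfolding k0_def by simp
        then have "\<bar>f' x\<bar> * \<bar>k' x\<bar> \<le> \<bar>f' x\<bar> * (pi/2)" by (intro mult_left_mono) simp_all
        then show "norm (f' x * k' x) \<le> norm (pi/2 * f' x)" by (simp add: abs_mult mult.commute)
      qed
    qed
  qed
  define G where "G x = f' x * k' x + f x * s x" for x
  have intG: "set_integrable lborel Delta G" unfolding G_def by (rule set_integrable_add'[OF intf'k' intfs])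

  have P1: "((\<lambda>x. f' x * c1 x + f x * s x) has_integral (f y * c1 y - f (-(pi/2)) * c1 (-(pi/2)))) {-(pi/2)..y}"
  proof (rule ftc_ae[where F="\<lambda>x. f x * c1 x", OF yab(1)])
    show "abs_cont_on (-(pi/2)) y (\<lambda>x. f x * c1 x)"
      by (rule ac_mult[OF yab(1) ac_sub[OF acf order_refl yab(2)], where L="pi/2" and M="pi/2"])
         (use c_lip[of "pi/2"] c_bound[of "pi/2"] in \<open>auto simp: c1_def\<close>)
    show "AE x in lborel. x \<in> {-(pi/2)..y} \<longrightarrow>
        ((\<lambda>x. f x * c1 x) has_real_derivative f' x * c1 x + f x * s x) (at x within {-(pi/2)..y})"
      using fder
    proof eventually_elim
      case (elim x)
      show ?case
      proof
        assume x: "x \<in> {-(pi/2)..y}"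
        then have "x \<in> Delta" using yab by (auto simp: Delta_def)
        then have "(f has_real_derivative f' x) (at x within Delta)" using elim by blast
        then have d1: "(f has_real_derivative f' x) (at x within {-(pi/2)..y})"
          by (rule DERIV_subset) (use yab in \<open>auto simp: Delta_def\<close>)
        have d2: "(c1 has_real_derivative -(pi/2) * sin (x - y)) (at x within {-(pi/2)..y})"
          unfolding c1_def by (auto intro!: derivative_eq_intros)
        have "\<bar>x - y\<bar> = -(x - y)" using x by auto
        moreover have "sin (y - x) = - sin (x - y)" by (metis minus_diff_eq sin_minus)
        ultimately have sx: "s x = -(pi/2) * sin (x - y)" by (simp add: s_def)
        show "((\<lambda>x. f x * c1 x) has_real_derivative f' x * c1 x + f x * s x) (at x within {-(pi/2)..y})"
          using DERIV_mult[OF d1 d2] by (rule DERIV_cong) (simp add: sx)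
      qed
    qed
  qed
  have P2: "((\<lambda>x. f' x * c2 x + f x * s x) has_integral (f (pi/2) * c2 (pi/2) - f y * c2 y)) {y..pi/2}"
  proof (rule ftc_ae[where F="\<lambda>x. f x * c2 x", OF yab(2)])
    show "abs_cont_on y (pi/2) (\<lambda>x. f x * c2 x)"
      by (rule ac_mult[OF yab(2) ac_sub[OF acf yab(1) order_refl], where L="pi/2" and M="pi/2"])
         (use c_lip[of "-(pi/2)"] c_bound[of "-(pi/2)"] in \<open>auto simp: c2_def\<close>)
    show "AE x in lborel. x \<in> {y..pi/2} \<longrightarrow>
        ((\<lambda>x. f x * c2 x) has_real_derivative f' x * c2 x + f x * s x) (at x within {y..pi/2})"
      using fder
    proof eventually_elim
      case (elim x)
      show ?case
      proof
        assume x: "x \<in> {y..pi/2}"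
        then have "x \<in> Delta" using yab by (auto simp: Delta_def)
        then have "(f has_real_derivative f' x) (at x within Delta)" using elim by blast
        then have d1: "(f has_real_derivative f' x) (at x within {y..pi/2})"
          by (rule DERIV_subset) (use yab in \<open>auto simp: Delta_def\<close>)
        have d2: "(c2 has_real_derivative (pi/2) * sin (x - y)) (at x within {y..pi/2})"
          unfolding c2_def by (auto intro!: derivative_eq_intros)
        have "\<bar>x - y\<bar> = x - y" using x by auto
        then have sx: "s x = (pi/2) * sin (x - y)" by (simp add: s_def)
        show "((\<lambda>x. f x * c2 x) has_real_derivative f' x * c2 x + f x * s x) (at x within {y..pi/2})"
          using DERIV_mult[OF d1 d2] by (rule DERIV_cong) (simp add: sx)
      qed
    qed
  qed
  have NY: "negligible (N \<union> {y})" using N by simp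
  have Q1: "(G has_integral (f y * c1 y - f (-(pi/2)) * c1 (-(pi/2)))) {-(pi/2)..y}"
  proof (rule has_integral_spike[OF NY _ P1])
    fix x assume x: "x \<in> {-(pi/2)..y} - (N \<union> {y})"
    then have "x \<in> Delta" using yab by (auto simp: Delta_def)
    then have "k' x = k0 x" using PN x by blast
    moreover have "x < y" using x by auto
    ultimately have "k' x = c1 x" by (simp add: k0_def c1_def)
    then show "G x = f' x * c1 x + f x * s x" by (simp add: G_def)
  qed
  have Q2: "(G has_integral (f (pi/2) * c2 (pi/2) - f y * c2 y)) {y..pi/2}"
  proof (rule has_integral_spike[OF NY _ P2])
    fix x assume x: "x \<in> {y..pi/2} - (N \<union> {y})"
    then have "x \<in> Delta" using yab by (auto simp: Delta_def)
    then have "k' x = k0 x" using PN x by blast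
    moreover have "x > y" using x by auto
    ultimately have "k' x = c2 x" by (simp add: k0_def c2_def)
    then show "G x = f' x * c2 x + f x * s x" by (simp add: G_def)
  qed
  have cA: "cos (-(pi/2) - y) = - sin y" by (simp add: cos_diff)
  have cB: "cos (pi/2 - y) = sin y" by (simp add: cos_diff)
  have HG: "(G has_integral (pi * f y)) Delta"
  proof -
    have "(G has_integral ((f y * c1 y - f (-(pi/2)) * c1 (-(pi/2))) + (f (pi/2) * c2 (pi/2) - f y * c2 y))) {-(pi/2)..pi/2}"
      by (rule has_integral_combine[OF yab Q1 Q2])
    moreover have "(f y * c1 y - f (-(pi/2)) * c1 (-(pi/2))) + (f (pi/2) * c2 (pi/2) - f y * c2 y) = pi * f y"
      unfolding c1_def c2_def using cA cB fab by (simp add: algebra_simps)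
    ultimately show ?thesis by (simp add: Delta_def)
  qed
  have S1: "(s has_integral ((pi/2) * cos (y - y) - (pi/2) * cos (y - (-(pi/2))))) {-(pi/2)..y}"
  proof -
    have "((\<lambda>t. (pi/2) * sin (y - t)) has_integral ((pi/2) * cos (y - y) - (pi/2) * cos (y - (-(pi/2))))) {-(pi/2)..y}"
    proof (rule fundamental_theorem_of_calculus[OF yab(1)])
      fix x assume "x \<in> {-(pi/2)..y}"
      have "((\<lambda>t. (pi/2) * cos (y - t)) has_real_derivative (pi/2) * sin (y - x)) (at x within {-(pi/2)..y})"
        by (auto intro!: derivative_eq_intros)
      then show "((\<lambda>t. (pi/2) * cos (y - t)) has_vector_derivative (pi/2) * sin (y - x)) (at x within {-(pi/2)..y})"
        by (simp add: has_real_derivative_iff_has_vector_derivative)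
    qed
    then show ?thesis
    proof (rule has_integral_eq[rotated])
      fix x assume "x \<in> {-(pi/2)..y}"
      then have "\<bar>x - y\<bar> = y - x" by auto
      then show "(pi/2) * sin (y - x) = s x" by (simp add: s_def)
    qed
  qed
  have S2: "(s has_integral (-(pi/2) * cos (pi/2 - y) - (-(pi/2) * cos (y - y)))) {y..pi/2}"
  proof -
    have "((\<lambda>t. (pi/2) * sin (t - y)) has_integral (-(pi/2) * cos (pi/2 - y) - (-(pi/2) * cos (y - y)))) {y..pi/2}"
    proof (rule fundamental_theorem_of_calculus[OF yab(2)])
      fix x assume "x \<in> {y..pi/2}"
      have "((\<lambda>t. -(pi/2) * cos (t - y)) has_real_derivative (pi/2) * sin (x - y)) (at x within {y..pi/2})"
        by (auto intro!: derivative_eq_intros)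
      then show "((\<lambda>t. -(pi/2) * cos (t - y)) has_vector_derivative (pi/2) * sin (x - y)) (at x within {y..pi/2})"
        by (simp add: has_real_derivative_iff_has_vector_derivative)
    qed
    then show ?thesis
    proof (rule has_integral_eq[rotated])
      fix x assume "x \<in> {y..pi/2}"
      then have "\<bar>x - y\<bar> = x - y" by auto
      then show "(pi/2) * sin (x - y) = s x" by (simp add: s_def)
    qed
  qed
  have HS: "(s has_integral pi) Delta"
  proof -
    have "(s has_integral (((pi/2) * cos (y - y) - (pi/2) * cos (y - (-(pi/2)))) + (-(pi/2) * cos (pi/2 - y) - (-(pi/2) * cos (y - y))))) {-(pi/2)..pi/2}"
      by (rule has_integral_combine[OF yab S1 S2])
    moreover have "cos (y - (-(pi/2))) = - sin y" by (simp add: cos_add)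
    ultimately show ?thesis using cB by (simp add: Delta_def algebra_simps)
  qed
  have HK: "((\<lambda>x. K_i x y) has_integral pi) Delta"
  proof -
    have "((\<lambda>x. 2 - s x) has_integral (measure lborel {-(pi/2)..pi/2} *\<^sub>R 2 - pi)) {-(pi/2)..pi/2}"
      by (rule has_integral_diff[OF has_integral_const_real HS[unfolded Delta_def]])
    moreover have "measure lborel {-(pi/2)..pi/2} = pi" by (simp add: content_real)
    ultimately show ?thesis by (simp add: Ks Delta_def)
  qed
  have LIf: "(LINT x:Delta|lborel. f x) = integral Delta f"
    by (rule set_borel_integral_eq_integral(2)[OF intf])
  have fint: "f integrable_on Delta" by (rule set_borel_integral_eq_integral(1)[OF intf])
  have LIk: "(LINT x:Delta|lborel. K_i x y) = pi"
    using set_borel_integral_eq_integral(2)[OF intk] integral_unique[OF HK] by simp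
  have eqfun: "(\<lambda>x. f x * K_i x y - f' x * k' x) = (\<lambda>x. 2 * f x - G x)"
    by (auto simp: Ks G_def algebra_simps fun_eq_iff)
  have int2: "set_integrable lborel Delta (\<lambda>x. 2 * f x - G x)"
    by (rule set_integrable_diff'[OF set_integrable_mult_right[OF intf] intG])
  have "((\<lambda>x. 2 * f x - G x) has_integral (2 * integral Delta f - pi * f y)) Delta"
    by (rule has_integral_diff[OF has_integral_mult_right[OF integrable_integral[OF fint]] HG])
  then have LI2: "(LINT x:Delta|lborel. f x * K_i x y - f' x * k' x) = 2 * integral Delta f - pi * f y"
    unfolding eqfun using set_borel_integral_eq_integral(2)[OF int2] integral_unique by simp
  show ?thesis
    unfolding ip_i_def LIf LIk LI2 by (simp add: field_simps power2_eq_square)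
qed


theorem theorem3p3:
  fixes f :: "real \<Rightarrow> real" and y :: real
  assumes "H1_0 f" and "y \<in> Delta"
  shows "H1_0 (\<lambda>x. K_i x y)
    \<and> (\<forall>f' k'. H1_deriv f f' \<longrightarrow> H1_deriv (\<lambda>x. K_i x y) k'
          \<longrightarrow> f y = ip_i f f' (\<lambda>x. K_i x y) k')"
  using k_H1(2)[OF assms(2)] repro[OF assms(1) assms(2)] by blast

end
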